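(* Let $p>1$ and let $\varphi:\mathbb{R}^n\to\mathbb{R}\cup\{+\infty\}$ be proper and lower semicontinuous. Suppose $\bar x=0$ is a $p$-calm point of $\varphi$ with constant $M>0$ and $\varphi(0)=0$. Then for any $\gamma\in\big(0,\frac{2^{1-p}}{Mp}\big)$ and any $\varepsilon>0$ there is a neighborhood $U$ of $0$ such that $\operatorname{prox}^p_{\gamma\varphi}(x)\neq\emptyset$ for all $x\in U$, and if $y\in\operatorname{prox}^p_{\gamma\varphi}(x)$ with $x\in U$, then $\|y\|<\varepsilon$, $\varphi(y)<\varepsilon$, and $\frac1\gamma\|x-y\|^{p-1}<\varepsilon$.
   Context: $\operatorname{prox}^p_{\gamma\varphi}(x):=\operatorname{argmin}_{y}\big(\varphi(y)+\frac{1}{p\gamma}\|x-y\|^p\big)$. A point $\bar x\in\operatorname{dom}\varphi$ is a $p$-calm point of $\varphi$ with constant $M>0$ if $\varphi(x)+M\|x-\bar x\|^p>\varphi(\bar x)$ for all $x\neq\bar x$. *)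

theory Defs
  imports "HOL-Analysis.Analysis"
begin

text \<open>Extended-real-valued functions phi : R^n -> R \<union> {+inf}; R^n is rendered as an
  arbitrary Euclidean space 'a.\<close>

definition proper_fun :: "('a \<Rightarrow> ereal) \<Rightarrow> bool" where
  "proper_fun \<phi> \<longleftrightarrow> (\<forall>x. \<phi> x \<noteq> -\<infinity>) \<and> (\<exists>x. \<phi> x < \<infinity>)"

definition lsc :: "('a::topological_space \<Rightarrow> ereal) \<Rightarrow> bool" where
  "lsc \<phi> \<longleftrightarrow> (\<forall>x. \<phi> x \<le> Liminf (at x) \<phi>)"

definition prox :: "real \<Rightarrow> real \<Rightarrow> ('a::real_normed_vector \<Rightarrow> ereal) \<Rightarrow> 'a \<Rightarrow> 'a set" where
  "prox p \<gamma> \<phi> x =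
     {y. \<forall>z. \<phi> y + ereal ((1 / (p * \<gamma>)) * norm (x - y) powr p)
              \<le> \<phi> z + ereal ((1 / (p * \<gamma>)) * norm (x - z) powr p)}"

definition p_calm :: "real \<Rightarrow> ('a::real_normed_vector \<Rightarrow> ereal) \<Rightarrow> 'a \<Rightarrow> real \<Rightarrow> bool" where
  "p_calm p \<phi> xb M \<longleftrightarrow> M > 0 \<and> \<phi> xb < \<infinity> \<and>
     (\<forall>x. x \<noteq> xb \<longrightarrow> \<phi> x + ereal (M * norm (x - xb) powr p) > \<phi> xb)"

end

theory Submission
  imports Defs
begin

lemma powr_sum_le:
  fixes a b p :: real
  assumes "p \<ge> 1" "a \<ge> 0" "b \<ge> 0"
  shows "(a + b) powr p \<le> 2 powr (p - 1) * (a powr p + b powr p)"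
proof (cases "a = 0 \<or> b = 0")
  case True
  have "1 \<le> 2 powr (p - 1)" using assms by (intro ge_one_powr_ge_zero) auto
  then show ?thesis using True assms
    by (auto intro!: mult_right_mono[where a=1, simplified] simp: mult_le_cancel_right1)
next
  case False
  then have ab: "a > 0" "b > 0" using assms by auto
  have "((1 - 1/2) *\<^sub>R a + (1/2) *\<^sub>R b) powr p \<le> (1 - 1/2) * a powr p + (1/2) * b powr p"
    by (rule convex_onD[OF powr_convex[OF assms(1)]]) (use ab in auto)
  then have h: "((a + b) / 2) powr p \<le> (a powr p + b powr p) / 2" by (simp add: field_simps)
  have "(a + b) powr p = 2 powr p * ((a + b) / 2) powr p"
  proof -
    have e: "2 * ((a + b) / 2) = a + b" by simp
    have "(a + b) powr p = (2 * ((a + b) / 2)) powr p" by (simp only: e)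
    also have "\<dots> = 2 powr p * ((a + b) / 2) powr p" using ab by (intro powr_mult)
    finally show ?thesis .
  qed
  also have "\<dots> \<le> 2 powr p * ((a powr p + b powr p) / 2)"
    by (rule mult_left_mono[OF h]) simp
  also have "\<dots> = 2 powr (p - 1) * (a powr p + b powr p)"
    by (simp add: powr_diff)
  finally show ?thesis .
qed

lemma lsc_nhds:
  assumes "lsc \<phi>" "t < \<phi> x"
  shows "eventually (\<lambda>y. t < \<phi> y) (nhds x)"
proof -
  have "t < Liminf (at x) \<phi>" using assms unfolding lsc_def by (meson less_le_trans)
  then have "eventually (\<lambda>y. t < \<phi> y) (at x)"
    using le_Liminf_iff[of "Liminf (at x) \<phi>" "at x" \<phi>] by auto
  then have "eventually (\<lambda>y. y \<noteq> x \<longrightarrow> t < \<phi> y) (nhds x)"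
    by (simp add: eventually_at_filter)
  then show ?thesis
    by (rule eventually_mono) (use assms(2) in auto)
qed

lemma lsc_plus_nhds:
  fixes \<phi> :: "'a::metric_space \<Rightarrow> ereal"
  assumes "lsc \<phi>" "\<And>x. \<phi> x \<noteq> -\<infinity>" "isCont h x" "ereal t < \<phi> x + ereal (h x)"
  shows "eventually (\<lambda>y. ereal t < \<phi> y + ereal (h y)) (nhds x)"
proof -
  obtain s where s: "ereal s < \<phi> x" "t < s + h x"
  proof (cases "\<phi> x")
    case (real r)
    show ?thesis
      by (rule that[of "r - (r + h x - t) / 2"]) (use real assms(4) in \<open>auto simp: field_simps\<close>)
  next
    case PInf
    show ?thesis by (rule that[of "t - h x + 1"]) (use PInf in auto)
  next
    case MInf
    then show ?thesis using assms(2) by auto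
  qed
  have e1: "eventually (\<lambda>y. ereal s < \<phi> y) (nhds x)"
    by (rule lsc_nhds[OF assms(1) s(1)])
  have "(h \<longlongrightarrow> h x) (nhds x)" using assms(3) by (simp add: isCont_def tendsto_at_iff_tendsto_nhds[symmetric])
  then have e2: "eventually (\<lambda>y. t - s < h y) (nhds x)"
    using s(2) by (intro order_tendstoD(1)) auto
  show ?thesis
  proof (rule eventually_mono[OF eventually_conj[OF e1 e2]])
    fix y assume "ereal s < \<phi> y \<and> t - s < h y"
    then show "ereal t < \<phi> y + ereal (h y)"
      by (cases "\<phi> y") auto
  qed
qed

lemma calm_lower:
  fixes \<phi> :: "'a::real_normed_vector \<Rightarrow> ereal"
  assumes "p_calm p \<phi> 0 M" "\<phi> 0 = 0"
  shows "ereal (- M * norm y powr p) \<le> \<phi> y"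
proof (cases "y = 0")
  case True then show ?thesis using assms by simp
next
  case False
  then have "\<phi> y + ereal (M * norm y powr p) > 0" using assms unfolding p_calm_def by auto
  then show ?thesis by (cases "\<phi> y") auto
qed

lemma g_lower:
  fixes \<phi> :: "'a::real_normed_vector \<Rightarrow> ereal"
  assumes "p \<ge> 1" "p_calm p \<phi> 0 M" "\<phi> 0 = 0" "M > 0"
  shows "ereal (c * norm (x - y) powr p - M * 2 powr (p - 1) * (norm (x - y) powr p + norm x powr p))
           \<le> \<phi> y + ereal (c * norm (x - y) powr p)"
proof -
  have "norm y \<le> norm x + norm (x - y)"
    using norm_triangle_ineq4[of x "x - y"] by simp
  then have "norm y powr p \<le> (norm (x - y) + norm x) powr p"
    using assms(1) by (intro powr_mono2) auto
  also have "\<dots> \<le> 2 powr (p - 1) * (norm (x - y) powr p + norm x powr p)"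
    using assms(1) by (intro powr_sum_le) auto
  finally have "M * norm y powr p \<le> M * (2 powr (p - 1) * (norm (x - y) powr p + norm x powr p))"
    using assms(4) by (intro mult_left_mono) auto
  then have "ereal (- M * 2 powr (p - 1) * (norm (x - y) powr p + norm x powr p)) \<le> ereal (- M * norm y powr p)"
    by simp
  also have "\<dots> \<le> \<phi> y" by (rule calm_lower[OF assms(2,3)])
  finally have h: "ereal (- M * 2 powr (p - 1) * (norm (x - y) powr p + norm x powr p)) \<le> \<phi> y" .
  show ?thesis
    using add_right_mono[OF h, of "ereal (c * norm (x - y) powr p)"] by simp
qed

lemma prox_exists:
  fixes \<phi> :: "'a::euclidean_space \<Rightarrow> ereal"
  assumes "p > 1" "\<And>x. \<phi> x \<noteq> -\<infinity>" "lsc \<phi>" "p_calm p \<phi> 0 M" "\<phi> 0 = 0" "M > 0"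
    "M * 2 powr (p - 1) < 1 / (p * \<gamma>)"
  shows "prox p \<gamma> \<phi> x \<noteq> {}"
proof -
  define c where "c = 1 / (p * \<gamma>)"
  define M' where "M' = M * 2 powr (p - 1)"
  define g where "g y = \<phi> y + ereal (c * norm (x - y) powr p)" for y
  define b where "b = norm x"
  have cM: "M' < c" using assms(7) by (simp add: c_def M'_def)
  have M'pos: "M' > 0" using assms(6) by (simp add: M'_def)
  have low: "ereal ((c - M') * norm (x - y) powr p - M' * b powr p) \<le> g y" for y
    using g_lower[OF _ assms(4,5,6), of c x y] assms(1)
    by (simp add: g_def b_def M'_def algebra_simps)
  define m where "m = (INF y. g y)"
  have m_le: "m \<le> g z" for z by (simp add: m_def INF_lower)
  have g0: "g 0 = ereal (c * b powr p)" by (simp add: g_def b_def assms(5))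
  have m_ge: "ereal (- M' * b powr p) \<le> m" unfolding m_def
  proof (rule INF_greatest)
    fix y
    have "0 \<le> (c - M') * norm (x - y) powr p" using cM by simp
    then have "ereal (- M' * b powr p) \<le> ereal ((c - M') * norm (x - y) powr p - M' * b powr p)"
      by simp
    also have "\<dots> \<le> g y" by (rule low)
    finally show "ereal (- M' * b powr p) \<le> g y" .
  qed
  obtain mr where mr: "m = ereal mr"
    using m_ge m_le[of 0] g0 by (cases m) auto
  have mr_le: "mr \<le> c * b powr p" using m_le[of 0] g0 mr by simp
  have "\<exists>y. g y < ereal (mr + inverse (real (Suc k)))" for k
  proof -
    have "m < ereal (mr + inverse (real (Suc k)))" using mr by simp
    then show ?thesis unfolding m_def by (simp add: INF_less_iff)
  qed
  then obtain Y where Y: "\<And>k. g (Y k) < ereal (mr + inverse (real (Suc k)))" by metis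
  define R where "R = ((c * b powr p + 1 + M' * b powr p) / (c - M')) powr (1 / p)"
  have Yin: "Y k \<in> cball x R" for k
  proof -
    have "inverse (real (Suc k)) \<le> 1" by (simp add: inverse_le_1_iff)
    then have "ereal ((c - M') * norm (x - Y k) powr p - M' * b powr p) < ereal (c * b powr p + 1)"
      using low[of "Y k"] Y[of k] mr_le
      by (meson ereal_less_eq(3) add_mono order.refl le_less_trans order.strict_trans2)
    then have "(c - M') * norm (x - Y k) powr p < c * b powr p + 1 + M' * b powr p" by simp
    then have "norm (x - Y k) powr p \<le> (c * b powr p + 1 + M' * b powr p) / (c - M')"
      using cM by (simp add: field_simps)
    then have "(norm (x - Y k) powr p) powr (1 / p) \<le> R"
      unfolding R_def using assms(1) by (intro powr_mono2) auto
    then have "norm (x - Y k) \<le> R" using assms(1) by (simp add: powr_powr)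
    then show ?thesis by (simp add: dist_norm)
  qed
  have "seq_compact (cball x R)" by (intro compact_imp_seq_compact compact_cball)
  then obtain l r where lr: "l \<in> cball x R" "strict_mono r" "(Y \<circ> r) \<longlonglongrightarrow> l"
    unfolding seq_compact_def using Yin by metis
  have cont: "isCont (\<lambda>y. c * norm (x - y) powr p) l"
  proof -
    have "continuous_on UNIV (\<lambda>y. norm (x - y) powr p)"
      using assms(1) by (intro continuous_on_powr' continuous_intros) auto
    then have h: "isCont (\<lambda>y. norm (x - y) powr p) l"
      by (simp add: continuous_on_eq_continuous_at)
    show ?thesis using isCont_mult[OF continuous_const h, of c] by simp
  qed
  have key: "g l \<le> ereal (mr + inverse (real (Suc k)))" for k
  proof (rule ccontr)
    assume "\<not> ?thesis"
    then have "ereal (mr + inverse (real (Suc k))) < g l" by simp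
    then have "eventually (\<lambda>y. ereal (mr + inverse (real (Suc k))) < g y) (nhds l)"
      unfolding g_def by (rule lsc_plus_nhds[OF assms(3) assms(2) cont])
    then have "eventually (\<lambda>n. ereal (mr + inverse (real (Suc k))) < g ((Y \<circ> r) n)) sequentially"
      using lr(3) unfolding filterlim_iff by blast
    moreover have "eventually (\<lambda>n. n \<ge> k) sequentially" by (simp add: eventually_ge_at_top)
    ultimately have "eventually (\<lambda>n. ereal (mr + inverse (real (Suc k))) < g ((Y \<circ> r) n) \<and> n \<ge> k) sequentially"
      by (rule eventually_conj)
    then obtain N where "\<forall>n\<ge>N. ereal (mr + inverse (real (Suc k))) < g ((Y \<circ> r) n) \<and> n \<ge> k"
      unfolding eventually_sequentially by blast
    then obtain n where n: "ereal (mr + inverse (real (Suc k))) < g (Y (r n))" "n \<ge> k"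
      by auto
    have "r n \<ge> k" using seq_suble[OF lr(2), of n] n(2) by simp
    then have "inverse (real (Suc (r n))) \<le> inverse (real (Suc k))"
      by (simp add: le_imp_inverse_le)
    then have "g (Y (r n)) < ereal (mr + inverse (real (Suc k)))"
      using Y[of "r n"] by (meson add_left_mono ereal_less_eq(3) order.strict_trans2)
    then show False using n(1) by simp
  qed
  have gl: "g l \<le> m"
  proof -
    obtain v where v: "g l = ereal v"
      using key[of 0] m_le[of l] mr by (cases "g l") auto
    have "v \<le> mr"
    proof (rule ccontr)
      assume "\<not> v \<le> mr"
      then obtain k where "inverse (real (Suc k)) < v - mr"
        using reals_Archimedean[of "v - mr"] by auto
      then show False using key[of k] v by simp
    qed
    then show ?thesis using v mr by simp
  qed
  have "l \<in> prox p \<gamma> \<phi> x"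
    unfolding prox_def mem_Collect_eq
  proof
    fix z
    show "\<phi> l + ereal (1 / (p * \<gamma>) * norm (x - l) powr p) \<le> \<phi> z + ereal (1 / (p * \<gamma>) * norm (x - z) powr p)"
      using gl m_le[of z] unfolding g_def c_def by simp
  qed
  then show ?thesis by blast
qed

lemma prox_est:
  fixes \<phi> :: "'a::real_normed_vector \<Rightarrow> ereal"
  assumes "p > 1" "p_calm p \<phi> 0 M" "\<phi> 0 = 0" "M > 0" "\<gamma> > 0" "\<And>x. \<phi> x \<noteq> -\<infinity>"
    "y \<in> prox p \<gamma> \<phi> x"
  shows "(1 / (p * \<gamma>) - M * 2 powr (p - 1)) * norm (x - y) powr p
           \<le> (1 / (p * \<gamma>) + M * 2 powr (p - 1)) * norm x powr p"
    and "\<phi> y \<le> ereal (1 / (p * \<gamma>) * norm x powr p)"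
proof -
  define c where "c = 1 / (p * \<gamma>)"
  have c0: "c \<ge> 0" using assms(1,5) by (simp add: c_def)
  have P: "\<phi> y + ereal (c * norm (x - y) powr p) \<le> ereal (c * norm x powr p)"
    using assms(7) assms(3) unfolding prox_def c_def by (auto dest: spec[of _ 0])
  have G: "ereal (c * norm (x - y) powr p - M * 2 powr (p - 1) * (norm (x - y) powr p + norm x powr p))
           \<le> \<phi> y + ereal (c * norm (x - y) powr p)"
    using g_lower[OF _ assms(2,3,4), of c x y] assms(1) by simp
  from order.trans[OF G P]
  have "c * norm (x - y) powr p - M * 2 powr (p - 1) * (norm (x - y) powr p + norm x powr p) \<le> c * norm x powr p"
    by simp
  then show "(1 / (p * \<gamma>) - M * 2 powr (p - 1)) * norm (x - y) powr p
           \<le> (1 / (p * \<gamma>) + M * 2 powr (p - 1)) * norm x powr p"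
    unfolding c_def[symmetric] by (simp add: algebra_simps)
  have "0 \<le> c * norm (x - y) powr p" using c0 by simp
  then have "\<phi> y \<le> \<phi> y + ereal (c * norm (x - y) powr p)"
    using assms(6)[of y] by (cases "\<phi> y") auto
  then show "\<phi> y \<le> ereal (1 / (p * \<gamma>) * norm x powr p)"
    using P unfolding c_def by simp
qed

theorem lemma4:
  fixes \<phi> :: "'a::euclidean_space \<Rightarrow> ereal" and p M \<gamma> \<epsilon> :: real
  assumes "p > 1"
    and "proper_fun \<phi>" and "lsc \<phi>"
    and "M > 0" and "p_calm p \<phi> 0 M" and "\<phi> 0 = 0"
    and "0 < \<gamma>" and "\<gamma> < 2 powr (1 - p) / (M * p)"
    and "\<epsilon> > 0"
  shows "\<exists>U. open U \<and> 0 \<in> U \<and>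
           (\<forall>x\<in>U. prox p \<gamma> \<phi> x \<noteq> {}) \<and>
           (\<forall>x\<in>U. \<forall>y\<in>prox p \<gamma> \<phi> x.
              norm y < \<epsilon> \<and> \<phi> y < ereal \<epsilon> \<and> (1 / \<gamma>) * norm (x - y) powr (p - 1) < \<epsilon>)"
proof -
  define c where "c = 1 / (p * \<gamma>)"
  define M' where "M' = M * 2 powr (p - 1)"
  have ninf: "\<And>x. \<phi> x \<noteq> -\<infinity>" using assms(2) unfolding proper_fun_def by auto
  have "\<gamma> * (M * p) < 2 powr (1 - p)"
    using assms(8) assms(1,4) by (simp add: field_simps)
  then have "M' * (p * \<gamma>) < 2 powr (1 - p) * 2 powr (p - 1)"
    unfolding M'_def using assms(1,4,7)
    by (smt (verit, ccfv_SIG) mult.assoc mult.commute mult_strict_right_mono powr_gt_zero)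
  also have "2 powr (1 - p) * 2 powr (p - 1) = (1::real)"
    by (simp add: powr_add[symmetric])
  finally have cM: "M' < c" unfolding c_def using assms(1,7) by (simp add: field_simps)
  have M'pos: "M' > 0" using assms(4) by (simp add: M'_def)
  define L where "L = (c + M') / (c - M')"
  have L0: "L \<ge> 0" using cM M'pos by (simp add: L_def)
  have tn: "((\<lambda>x::'a. norm x) \<longlongrightarrow> 0) (nhds 0)"
    by (intro tendsto_norm_zero filterlim_ident)
  have tp: "((\<lambda>x::'a. norm x powr p) \<longlongrightarrow> 0) (nhds 0)"
    using assms(1) by (intro tendsto_zero_powrI[OF tn]) auto
  have tL: "((\<lambda>x::'a. L * norm x powr p) \<longlongrightarrow> 0) (nhds 0)"
    using tendsto_mult_right_zero[OF tp, of L] by simp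
  have t1: "((\<lambda>x::'a. (L * norm x powr p) powr (1 / p) + norm x) \<longlongrightarrow> 0) (nhds 0)"
    using tendsto_add[OF tendsto_zero_powrI[OF tL tendsto_const] tn] assms(1) L0 by simp
  have t2: "((\<lambda>x::'a. c * norm x powr p) \<longlongrightarrow> 0) (nhds 0)"
    using tendsto_mult_right_zero[OF tp, of c] by simp
  have t3: "((\<lambda>x::'a. (1 / \<gamma>) * (L * norm x powr p) powr ((p - 1) / p)) \<longlongrightarrow> 0) (nhds 0)"
    using tendsto_mult_right_zero[OF tendsto_zero_powrI[OF tL tendsto_const], of "(p - 1) / p" "1 / \<gamma>"]
      assms(1) L0 by simp
  have "eventually (\<lambda>x::'a. (L * norm x powr p) powr (1 / p) + norm x < \<epsilon> \<and>
          c * norm x powr p < \<epsilon> \<and> (1 / \<gamma>) * (L * norm x powr p) powr ((p - 1) / p) < \<epsilon>) (nhds 0)"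
    using order_tendstoD(2)[OF t1 assms(9)] order_tendstoD(2)[OF t2 assms(9)]
      order_tendstoD(2)[OF t3 assms(9)] by (intro eventually_conj)
  then obtain U :: "'a set" where U: "open U" "0 \<in> U" "\<And>x. x \<in> U \<Longrightarrow> (L * norm x powr p) powr (1 / p) + norm x < \<epsilon> \<and>
          c * norm x powr p < \<epsilon> \<and> (1 / \<gamma>) * (L * norm x powr p) powr ((p - 1) / p) < \<epsilon>"
    unfolding eventually_nhds by blast
  have ex: "prox p \<gamma> \<phi> x \<noteq> {}" for x
    by (rule prox_exists[OF assms(1) ninf assms(3,5,6,4)]) (use cM in \<open>simp add: M'_def c_def\<close>)
  have est: "norm y < \<epsilon> \<and> \<phi> y < ereal \<epsilon> \<and> (1 / \<gamma>) * norm (x - y) powr (p - 1) < \<epsilon>"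
    if x: "x \<in> U" and y: "y \<in> prox p \<gamma> \<phi> x" for x y
  proof -
    note E = prox_est[OF assms(1,5,6,4,7) ninf y]
    have "(c - M') * norm (x - y) powr p \<le> (c + M') * norm x powr p"
      using E(1) unfolding c_def M'_def .
    then have ap: "norm (x - y) powr p \<le> L * norm x powr p"
      using cM unfolding L_def by (simp add: field_simps)
    have a1: "norm (x - y) \<le> (L * norm x powr p) powr (1 / p)"
    proof -
      have "(norm (x - y) powr p) powr (1 / p) \<le> (L * norm x powr p) powr (1 / p)"
        using ap assms(1) by (intro powr_mono2) auto
      then show ?thesis using assms(1) by (simp add: powr_powr)
    qed
    have a2: "norm (x - y) powr (p - 1) \<le> (L * norm x powr p) powr ((p - 1) / p)"
    proof -
      have "(norm (x - y) powr p) powr ((p - 1) / p) \<le> (L * norm x powr p) powr ((p - 1) / p)"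
        using ap assms(1) by (intro powr_mono2) auto
      then show ?thesis using assms(1) by (simp add: powr_powr)
    qed
    have "norm y \<le> norm (x - y) + norm x"
      using norm_triangle_ineq4[of x "x - y"] by simp
    then have 1: "norm y < \<epsilon>" using a1 U(3)[OF x] by linarith
    have "\<phi> y \<le> ereal (c * norm x powr p)" using E(2) unfolding c_def .
    moreover have "ereal (c * norm x powr p) < ereal \<epsilon>" using U(3)[OF x] by simp
    ultimately have 2: "\<phi> y < ereal \<epsilon>" by (rule le_less_trans)
    have "(1 / \<gamma>) * norm (x - y) powr (p - 1) \<le> (1 / \<gamma>) * (L * norm x powr p) powr ((p - 1) / p)"
      using a2 assms(7) by (intro mult_left_mono) auto
    then have 3: "(1 / \<gamma>) * norm (x - y) powr (p - 1) < \<epsilon>" using U(3)[OF x] by linarith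
    show ?thesis using 1 2 3 by blast
  qed
  show ?thesis using U(1,2) ex est by blast
qed

end
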